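(* On a 2-step nilmanifold $X=\Gamma\backslash G$ with abelian invariant complex structure $J$, let $\mu\in\mathfrak g^{*(0,1)}\otimes\mathfrak g^{1,0}$. Then $\mu$ generates an abelian deformation (in the sense of the context) if and only if $\overline\partial\mu=0$ and $\mu$ satisfies Condition A.
   Context: $\mathfrak g$ is the Lie algebra of $G$, real 2-step nilpotent with center $\mathfrak c$; $J$ abelian ($J^2=-1$, $[JA,JB]=[A,B]$); $\Gamma$ discrete co-compact. $\mathfrak t$ is a $J$-invariant complement of $\mathfrak c$ with real basis $\{X_j,JX_j\}_{1\le j\le n}$; $\{Z_\alpha,JZ_\alpha\}_{n+1\le\alpha\le n+m}$ real basis of $\mathfrak c$; $T_j=\frac12(X_j-iJX_j)$, $W_\alpha=\frac12(Z_\alpha-iJZ_\alpha)$ basis of $\mathfrak g^{1,0}$; $[\overline T_k,T_j]=\sum_\alpha E^\alpha_{kj}W_\alpha+\sum_\alpha F^\alpha_{kj}\overline W_\alpha$, $F^\alpha_{kj}=-\overline{E^\alpha_{jk}}$. $\{\omega^p\}$ dual $(1,0)$-basis; $\mu=\sum\mu^i_j\overline\omega^j\otimes T_i+\sum\mu^i_\alpha\overline\omega^\alpha\otimes T_i+\sum\mu^\beta_j\overline\omega^j\otimes W_\beta+\sum\mu^\beta_\alpha\overline\omega^\alpha\otimes W_\beta$, elements of $\mathfrak g^{*(0,1)}\otimes\mathfrak g^{1,0}$ being regarded as linear maps $\mathfrak g^{0,1}\to\mathfrak g^{1,0}$. $\overline\partial$: $\overline\partial V=\sum_p\overline\omega^p\otimes[\overline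 e_p,V]^{1,0}$ for $V\in\mathfrak g^{1,0}$, $\overline\partial\overline\sigma=(d\overline\sigma)^{(0,2)}$, $\overline\partial(\overline\sigma\otimes V)=\overline\partial\overline\sigma\otimes V-\overline\sigma\wedge\overline\partial V$. Condition A: $\sum_i(\mu^i_jF^\alpha_{ki}-\mu^i_kF^\alpha_{ji})=0$ and $\sum_i\mu^i_\alpha F^\beta_{ji}=0$ for all $j,k,\alpha,\beta$. "$\mu$ generates an abelian deformation" means: there is a power series $\Phi(t)=\sum_{r\ge1}t^r\phi_r$ with $\phi_r\in\mathfrak g^{*(0,1)}\otimes\mathfrak g^{1,0}$, $\phi_1=\mu$, convergent for small real $t$, such that for all small $t$ the vectors $\overline S_j=\overline T_j+\Phi(t)\overline T_j$ and $\overline V_\alpha=\overline W_\alpha+\Phi(t)\overline W_\alpha$ satisfy $[\overline S_j,\overline S_k]=0$, $[\overline S_j,\overline V_\alpha]=0$, $[\overline V_\alpha,\overline V_\beta]=0$ (so they span the $(0,1)$-space of an abelian invariant complex structure). *)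

theory Defs
  imports Complex_Main
begin

text \<open>
  For 1 \<le> j \<le> n the (1,0)-basis vector e_j is T_j,
  for n+1 \<le> \<alpha> \<le> n+m it is W_\<alpha>.  An element of the complexification
  of g is a pair (h, a): h p is the coefficient of e_p (the (1,0)-part) and
  a p the coefficient of the conjugate vector (the (0,1)-part).
  J acts by i on the e_p and by -i on their conjugates.
\<close>

type_synonym gvec = "(nat \<Rightarrow> complex) \<times> (nat \<Rightarrow> complex)"

definition idx :: "nat \<Rightarrow> nat \<Rightarrow> nat set" where
  "idx n m = {1..n+m}"

definition tidx :: "nat \<Rightarrow> nat set" where
  "tidx n = {1..n}"

definition cidx :: "nat \<Rightarrow> nat \<Rightarrow> nat set" where
  "cidx n m = {n+1..n+m}"

definition Fc :: "(nat \<Rightarrow> nat \<Rightarrow> nat \<Rightarrow> complex) \<Rightarrow> nat \<Rightarrow> nat \<Rightarrow> nat \<Rightarrow> complex" where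
  "Fc E \<alpha> k j = - cnj (E \<alpha> j k)"

text \<open>The Lie bracket of the complexification of g:
  [conj T_k, T_j] = \<Sum>_\<alpha> E^\<alpha>_{kj} W_\<alpha> + \<Sum>_\<alpha> F^\<alpha>_{kj} conj W_\<alpha>,
  all other brackets of basis vectors being zero (g^{1,0} and g^{0,1} are abelian
  since J is abelian, and c is central), extended bilinearly.\<close>
definition brk :: "nat \<Rightarrow> nat \<Rightarrow> (nat \<Rightarrow> nat \<Rightarrow> nat \<Rightarrow> complex) \<Rightarrow> gvec \<Rightarrow> gvec \<Rightarrow> gvec" where
  "brk n m E X Y =
    ((\<lambda>\<alpha>. if \<alpha> \<in> cidx n m then
        (\<Sum>k\<in>tidx n. \<Sum>j\<in>tidx n. (snd X k * fst Y j - snd Y k * fst X j) * E \<alpha> k j) else 0),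
     (\<lambda>\<alpha>. if \<alpha> \<in> cidx n m then
        (\<Sum>k\<in>tidx n. \<Sum>j\<in>tidx n. (snd X k * fst Y j - snd Y k * fst X j) * Fc E \<alpha> k j) else 0))"

definition gzero :: gvec where "gzero = ((\<lambda>_. 0), (\<lambda>_. 0))"

definition real_elem :: "nat \<Rightarrow> nat \<Rightarrow> gvec \<Rightarrow> bool" where
  "real_elem n m X \<longleftrightarrow> (\<forall>p\<in>idx n m. snd X p = cnj (fst X p))"

text \<open>The center of g is exactly c: no nonzero element of the complexification
  of t is central (c is central by construction of the bracket).\<close>
definition center_is_c :: "nat \<Rightarrow> nat \<Rightarrow> (nat \<Rightarrow> nat \<Rightarrow> nat \<Rightarrow> complex) \<Rightarrow> bool" where
  "center_is_c n m E \<longleftrightarrow>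
     (\<forall>X. (\<forall>Y. brk n m E X Y = gzero) \<longrightarrow> (\<forall>j\<in>tidx n. fst X j = 0 \<and> snd X j = 0))"

text \<open>Existence of a lattice \<Gamma> (Malcev's criterion): g has a real basis
  v_0,...,v_{N-1}, N = dim_R g = 2(n+m), with rational structure constants.\<close>
definition admits_lattice :: "nat \<Rightarrow> nat \<Rightarrow> (nat \<Rightarrow> nat \<Rightarrow> nat \<Rightarrow> complex) \<Rightarrow> bool" where
  "admits_lattice n m E \<longleftrightarrow>
     (\<exists>v :: nat \<Rightarrow> gvec.
        (\<forall>r<2*(n+m). real_elem n m (v r)) \<and>
        (\<forall>c :: nat \<Rightarrow> real.
           (\<forall>p\<in>idx n m. (\<Sum>r<2*(n+m). of_real (c r) * fst (v r) p) = 0 \<and>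
                         (\<Sum>r<2*(n+m). of_real (c r) * snd (v r) p) = 0)
           \<longrightarrow> (\<forall>r<2*(n+m). c r = 0)) \<and>
        (\<forall>r<2*(n+m). \<forall>s<2*(n+m). \<exists>q :: nat \<Rightarrow> rat.
           \<forall>p\<in>idx n m.
             fst (brk n m E (v r) (v s)) p = (\<Sum>u<2*(n+m). of_rat (q u) * fst (v u) p) \<and>
             snd (brk n m E (v r) (v s)) p = (\<Sum>u<2*(n+m). of_rat (q u) * snd (v u) p)))"

text \<open>Standing assumptions: g real 2-step nilpotent (non-abelian, center = c),
  abelian J (built into the bracket), and G admits a co-compact lattice.\<close>
definition two_step_abelian_nilmanifold :: "nat \<Rightarrow> nat \<Rightarrow> (nat \<Rightarrow> nat \<Rightarrow> nat \<Rightarrow> complex) \<Rightarrow> bool" where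
  "two_step_abelian_nilmanifold n m E \<longleftrightarrow> 1 \<le> n \<and> center_is_c n m E \<and> admits_lattice n m E"

text \<open>An element \<mu> of g^{*(0,1)} \<otimes> g^{1,0} is given by its coefficient matrix:
  \<mu> p q is the coefficient of conj(\<omega>^q) \<otimes> e_p, so that \<mu>(conj e_q) = \<Sum>_p \<mu> p q e_p.\<close>

definition ebar :: "nat \<Rightarrow> gvec" where
  "ebar a = ((\<lambda>_. 0), (\<lambda>p. if p = a then 1 else 0))"

definition holo :: "nat \<Rightarrow> nat \<Rightarrow> (nat \<Rightarrow> complex) \<Rightarrow> gvec" where
  "holo n m h = ((\<lambda>p. if p \<in> idx n m then h p else 0), (\<lambda>_. 0))"

text \<open>dbar V for V in g^{1,0}, as a g^{1,0}-valued (0,1)-form evaluated on conj e_a: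
  (dbar V)(conj e_a) = [conj e_a, V]^{1,0}.\<close>
definition dbar_vec :: "nat \<Rightarrow> nat \<Rightarrow> (nat \<Rightarrow> nat \<Rightarrow> nat \<Rightarrow> complex) \<Rightarrow> (nat \<Rightarrow> complex) \<Rightarrow> nat \<Rightarrow> nat \<Rightarrow> complex" where
  "dbar_vec n m E h a = fst (brk n m E (ebar a) (holo n m h))"

text \<open>dbar conj(\<omega>^q) = (d conj(\<omega>^q))^{(0,2)}, with d\<sigma>(X,Y) = -\<sigma>([X,Y]) for
  invariant forms; evaluated on (conj e_a, conj e_b).\<close>
definition dbar_form :: "nat \<Rightarrow> nat \<Rightarrow> (nat \<Rightarrow> nat \<Rightarrow> nat \<Rightarrow> complex) \<Rightarrow> nat \<Rightarrow> nat \<Rightarrow> nat \<Rightarrow> complex" where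
  "dbar_form n m E q a b = - snd (brk n m E (ebar a) (ebar b)) q"

text \<open>dbar \<mu> evaluated on (conj e_a, conj e_b), its e_p-coefficient, using
  dbar(\<sigma> \<otimes> V) = dbar \<sigma> \<otimes> V - \<sigma> \<and> dbar V and
  (\<sigma> \<and> \<psi>)(X,Y) = \<sigma>(X)\<psi>(Y) - \<sigma>(Y)\<psi>(X).\<close>
definition dbar :: "nat \<Rightarrow> nat \<Rightarrow> (nat \<Rightarrow> nat \<Rightarrow> nat \<Rightarrow> complex) \<Rightarrow> (nat \<Rightarrow> nat \<Rightarrow> complex) \<Rightarrow> nat \<Rightarrow> nat \<Rightarrow> nat \<Rightarrow> complex" where
  "dbar n m E \<mu> a b p =
     (\<Sum>q\<in>idx n m.
        dbar_form n m E q a b * \<mu> p q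
        - ((if q = a then 1 else 0) * dbar_vec n m E (\<lambda>i. \<mu> i q) b p
           - (if q = b then 1 else 0) * dbar_vec n m E (\<lambda>i. \<mu> i q) a p))"

definition dbar_closed :: "nat \<Rightarrow> nat \<Rightarrow> (nat \<Rightarrow> nat \<Rightarrow> nat \<Rightarrow> complex) \<Rightarrow> (nat \<Rightarrow> nat \<Rightarrow> complex) \<Rightarrow> bool" where
  "dbar_closed n m E \<mu> \<longleftrightarrow> (\<forall>a\<in>idx n m. \<forall>b\<in>idx n m. \<forall>p\<in>idx n m. dbar n m E \<mu> a b p = 0)"

definition conditionA :: "nat \<Rightarrow> nat \<Rightarrow> (nat \<Rightarrow> nat \<Rightarrow> nat \<Rightarrow> complex) \<Rightarrow> (nat \<Rightarrow> nat \<Rightarrow> complex) \<Rightarrow> bool" where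
  "conditionA n m E \<mu> \<longleftrightarrow>
     (\<forall>j\<in>tidx n. \<forall>k\<in>tidx n. \<forall>\<alpha>\<in>cidx n m.
        (\<Sum>i\<in>tidx n. \<mu> i j * Fc E \<alpha> k i - \<mu> i k * Fc E \<alpha> j i) = 0) \<and>
     (\<forall>j\<in>tidx n. \<forall>\<alpha>\<in>cidx n m. \<forall>\<beta>\<in>cidx n m.
        (\<Sum>i\<in>tidx n. \<mu> i \<alpha> * Fc E \<beta> j i) = 0)"

definition Phi :: "(nat \<Rightarrow> nat \<Rightarrow> nat \<Rightarrow> complex) \<Rightarrow> real \<Rightarrow> nat \<Rightarrow> nat \<Rightarrow> complex" where
  "Phi \<phi> t p q = (\<Sum>r. of_real t ^ Suc r * \<phi> (Suc r) p q)"

text \<open>The deformed (0,1)-vectors conj e_q + \<Phi>(t)(conj e_q).\<close>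
definition defo_vec :: "nat \<Rightarrow> nat \<Rightarrow> (nat \<Rightarrow> nat \<Rightarrow> nat \<Rightarrow> complex) \<Rightarrow> real \<Rightarrow> nat \<Rightarrow> gvec" where
  "defo_vec n m \<phi> t q =
     ((\<lambda>p. if p \<in> idx n m then Phi \<phi> t p q else 0), (\<lambda>p. if p = q then 1 else 0))"

definition generates_abelian_deformation ::
  "nat \<Rightarrow> nat \<Rightarrow> (nat \<Rightarrow> nat \<Rightarrow> nat \<Rightarrow> complex) \<Rightarrow> (nat \<Rightarrow> nat \<Rightarrow> complex) \<Rightarrow> bool" where
  "generates_abelian_deformation n m E \<mu> \<longleftrightarrow>
     (\<exists>\<phi> :: nat \<Rightarrow> nat \<Rightarrow> nat \<Rightarrow> complex.
        (\<forall>p\<in>idx n m. \<forall>q\<in>idx n m. \<phi> 1 p q = \<mu> p q) \<and>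
        (\<exists>\<epsilon>>0. \<forall>t::real. \<bar>t\<bar> < \<epsilon> \<longrightarrow>
           (\<forall>p\<in>idx n m. \<forall>q\<in>idx n m. summable (\<lambda>r. of_real t ^ Suc r * \<phi> (Suc r) p q)) \<and>
           (\<forall>q\<in>idx n m. \<forall>q'\<in>idx n m.
              brk n m E (defo_vec n m \<phi> t q) (defo_vec n m \<phi> t q') = gzero)))"

end

theory Submission
  imports Defs
begin


lemma powser_first_zero:
  fixes c :: "nat \<Rightarrow> complex" and e :: real
  assumes e: "e > 0"
    and h: "\<And>t. \<bar>t\<bar> < e \<Longrightarrow> (\<lambda>r. of_real t ^ Suc r * c r) sums 0"
  shows "c 0 = 0"
proof -
  define t0 where "t0 = e/2"
  have t0: "t0 > 0" "t0 < e" using e by (auto simp: t0_def)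
  have s0: "(\<lambda>r. of_real t0 ^ Suc r * c r) sums 0" using h t0 by simp
  have "(\<lambda>r. inverse (of_real t0) * (of_real t0 ^ Suc r * c r)) sums (inverse (of_real t0) * 0)"
    by (rule sums_mult[OF s0])
  moreover have "(\<lambda>r. inverse (of_real t0) * (of_real t0 ^ Suc r * c r)) = (\<lambda>r. c r * (complex_of_real t0) ^ r)"
    using t0 by (auto simp: field_simps)
  ultimately have "(\<lambda>r. c r * (complex_of_real t0) ^ r) sums 0" by simp
  hence sK: "summable (\<lambda>r. c r * (complex_of_real t0) ^ r)" by (rule sums_summable)
  define g where "g = (\<lambda>x::complex. \<Sum>r. c r * x ^ r)"
  have "isCont g 0" unfolding g_def
    by (rule isCont_powser[OF sK]) (use t0 in simp)
  hence "isCont (\<lambda>t::real. g (of_real t)) 0"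
    by (intro isCont_o2[where f="complex_of_real" and g=g]) (auto intro: continuous_intros)
  hence lim: "((\<lambda>t::real. g (of_real t)) \<longlongrightarrow> g 0) (at 0)"
    by (simp add: isCont_def)
  have ev: "eventually (\<lambda>t::real. g (of_real t) = 0) (at 0)"
  proof -
    have "eventually (\<lambda>t::real. t \<noteq> 0 \<and> \<bar>t\<bar> < e) (at 0)"
      using e by (auto simp: eventually_at intro!: exI[of _ e])
    moreover have "g (of_real t) = 0" if "t \<noteq> 0" "\<bar>t\<bar> < e" for t
    proof -
      have "(\<lambda>r. inverse (of_real t) * (of_real t ^ Suc r * c r)) sums (inverse (of_real t) * 0)"
        by (rule sums_mult[OF h[OF that(2)]])
      moreover have "(\<lambda>r. inverse (of_real t) * (of_real t ^ Suc r * c r)) = (\<lambda>r. c r * (complex_of_real t) ^ r)"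
        using that by (auto simp: field_simps)
      ultimately have "(\<lambda>r. c r * (complex_of_real t) ^ r) sums 0" by simp
      thus ?thesis unfolding g_def by (simp add: sums_iff)
    qed
    ultimately show ?thesis by (auto elim: eventually_mono)
  qed
  have "((\<lambda>t::real. g (of_real t)) \<longlongrightarrow> 0) (at 0)"
    by (rule tendsto_eventually[OF ev])
  with lim have "g 0 = 0" using tendsto_unique[OF at_neq_bot] by blast
  thus ?thesis by (simp add: g_def)
qed


definition LL :: "nat \<Rightarrow> (nat \<Rightarrow> nat \<Rightarrow> nat \<Rightarrow> complex) \<Rightarrow> (nat \<Rightarrow> nat \<Rightarrow> complex) \<Rightarrow> nat \<Rightarrow> nat \<Rightarrow> nat \<Rightarrow> complex" where
  "LL n K P q q' \<alpha> = (\<Sum>j\<in>tidx n. (if q \<in> tidx n then K \<alpha> q j else 0) * P j q'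
        - (if q' \<in> tidx n then K \<alpha> q' j else 0) * P j q)"

lemma fin_tidx[simp]: "finite (tidx n)" by (simp add: tidx_def)

lemma tidx_sub: "tidx n \<subseteq> idx n m" by (auto simp: tidx_def idx_def)

lemma brk_defo:
  assumes "q \<in> idx n m" "q' \<in> idx n m"
  shows "brk n m E (defo_vec n m \<phi> t q) (defo_vec n m \<phi> t q') =
    ((\<lambda>\<alpha>. if \<alpha> \<in> cidx n m then LL n E (Phi \<phi> t) q q' \<alpha> else 0),
     (\<lambda>\<alpha>. if \<alpha> \<in> cidx n m then LL n (Fc E) (Phi \<phi> t) q q' \<alpha> else 0))"
proof -
  have key: "(\<Sum>k\<in>tidx n. \<Sum>j\<in>tidx n. ((if k = q then 1 else 0) * (if j \<in> idx n m then P j q' else 0)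
      - (if k = q' then 1 else 0) * (if j \<in> idx n m then P j q else 0)) * K k j)
     = (\<Sum>j\<in>tidx n. (if q \<in> tidx n then K q j else 0) * P j q'
        - (if q' \<in> tidx n then K q' j else 0) * P j q)" for P :: "nat \<Rightarrow> nat \<Rightarrow> complex" and K :: "nat \<Rightarrow> nat \<Rightarrow> complex"
  proof -
    have "(\<Sum>k\<in>tidx n. \<Sum>j\<in>tidx n. ((if k = q then 1 else 0) * (if j \<in> idx n m then P j q' else 0)
      - (if k = q' then 1 else 0) * (if j \<in> idx n m then P j q else 0)) * K k j)
      = (\<Sum>k\<in>tidx n. \<Sum>j\<in>tidx n. ((if k = q then K k j * P j q' else 0)
      - (if k = q' then K k j * P j q else 0)))"
      using tidx_sub[of n m] by (intro sum.cong refl) (auto simp: algebra_simps)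
    also have "\<dots> = (\<Sum>j\<in>tidx n. \<Sum>k\<in>tidx n. ((if k = q then K k j * P j q' else 0)
      - (if k = q' then K k j * P j q else 0)))" by (rule sum.swap)
    also have "\<dots> = (\<Sum>j\<in>tidx n. (if q \<in> tidx n then K q j else 0) * P j q'
        - (if q' \<in> tidx n then K q' j else 0) * P j q)"
      by (intro sum.cong refl) (simp add: sum_subtractf sum.delta)
    finally show ?thesis .
  qed
  show ?thesis
    unfolding brk_def defo_vec_def LL_def
    by (simp add: fun_eq_iff key)
qed


lemma idx_split: "p \<in> idx n m \<longleftrightarrow> p \<in> tidx n \<or> p \<in> cidx n m"
  by (auto simp: idx_def tidx_def cidx_def)
lemma tc_disj: "p \<in> cidx n m \<Longrightarrow> p \<notin> tidx n"
  by (auto simp: tidx_def cidx_def)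

lemma dbar_eq:
  assumes "a \<in> idx n m" "b \<in> idx n m"
  shows "dbar n m E \<mu> a b p = - (if p \<in> cidx n m then LL n E \<mu> b a p else 0)"
proof -
  have fin: "finite (idx n m)" by (simp add: idx_def)
  have df: "dbar_form n m E q a b = 0" for q
    by (simp add: dbar_form_def brk_def ebar_def)
  have dv: "dbar_vec n m E h c p = (if p \<in> cidx n m then
      (\<Sum>j\<in>tidx n. (if c \<in> tidx n then E p c j else 0) * h j) else 0)" for h c
  proof -
    have "(\<Sum>k\<in>tidx n. \<Sum>j\<in>tidx n. ((if k = c then 1 else 0) * (if j \<in> idx n m then h j else 0)) * E p k j)
        = (\<Sum>k\<in>tidx n. \<Sum>j\<in>tidx n. (if k = c then E p k j * h j else 0))"
      using tidx_sub[of n m] by (intro sum.cong refl) auto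
    also have "\<dots> = (\<Sum>j\<in>tidx n. \<Sum>k\<in>tidx n. (if k = c then E p k j * h j else 0))" by (rule sum.swap)
    also have "\<dots> = (\<Sum>j\<in>tidx n. (if c \<in> tidx n then E p c j else 0) * h j)"
      by (intro sum.cong refl) (simp add: sum.delta)
    finally show ?thesis by (simp add: dbar_vec_def brk_def ebar_def holo_def)
  qed
  have "dbar n m E \<mu> a b p = (\<Sum>q\<in>idx n m. - ((if q = a then dbar_vec n m E (\<lambda>i. \<mu> i q) b p else 0)
      - (if q = b then dbar_vec n m E (\<lambda>i. \<mu> i q) a p else 0)))"
    unfolding dbar_def df by (intro sum.cong refl) auto
  also have "\<dots> = - (dbar_vec n m E (\<lambda>i. \<mu> i a) b p - dbar_vec n m E (\<lambda>i. \<mu> i b) a p)"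
    using assms fin by (simp add: sum_negf sum_subtractf sum.delta)
  also have "\<dots> = - (if p \<in> cidx n m then LL n E \<mu> b a p else 0)"
    unfolding dv LL_def by (simp add: sum_subtractf mult.commute)
  finally show ?thesis .
qed

lemma dbar_closed_iff:
  "dbar_closed n m E \<mu> \<longleftrightarrow> (\<forall>q\<in>idx n m. \<forall>q'\<in>idx n m. \<forall>\<alpha>\<in>cidx n m. LL n E \<mu> q q' \<alpha> = 0)"
  unfolding dbar_closed_def
  apply (auto simp: dbar_eq)
  apply (metis dbar_eq idx_split neg_equal_0_iff_equal)
  done



lemma condA_iff:
  "conditionA n m E \<mu> \<longleftrightarrow> (\<forall>q\<in>idx n m. \<forall>q'\<in>idx n m. \<forall>\<alpha>\<in>cidx n m. LL n (Fc E) \<mu> q q' \<alpha> = 0)"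
proof
  assume A: "conditionA n m E \<mu>"
  show "\<forall>q\<in>idx n m. \<forall>q'\<in>idx n m. \<forall>\<alpha>\<in>cidx n m. LL n (Fc E) \<mu> q q' \<alpha> = 0"
  proof (intro ballI)
    fix q q' \<alpha> assume q: "q \<in> idx n m" and q': "q' \<in> idx n m" and a: "\<alpha> \<in> cidx n m"
    from q q' consider "q \<in> tidx n" "q' \<in> tidx n" | "q \<in> tidx n" "q' \<in> cidx n m"
      | "q \<in> cidx n m" "q' \<in> tidx n" | "q \<in> cidx n m" "q' \<in> cidx n m"
      using idx_split by blast
    then show "LL n (Fc E) \<mu> q q' \<alpha> = 0"
    proof cases
      case 1
      then show ?thesis using A a unfolding conditionA_def LL_def
        by (auto simp: mult.commute)
    next
      case 2
      then show ?thesis using A a tc_disj[of q' n m] unfolding conditionA_def LL_def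
        by (auto simp: mult.commute)
    next
      case 3
      have "(\<Sum>i\<in>tidx n. \<mu> i q * Fc E \<alpha> q' i) = 0" using A a 3 unfolding conditionA_def by auto
      then have "(\<Sum>i\<in>tidx n. Fc E \<alpha> q' i * \<mu> i q) = 0" by (simp add: mult.commute)
      then show ?thesis using 3 tc_disj[of q n m] unfolding LL_def
        by (simp add: sum_negf)
    next
      case 4
      then show ?thesis using tc_disj[of q n m] tc_disj[of q' n m] unfolding LL_def by simp
    qed
  qed
next
  assume B: "\<forall>q\<in>idx n m. \<forall>q'\<in>idx n m. \<forall>\<alpha>\<in>cidx n m. LL n (Fc E) \<mu> q q' \<alpha> = 0"
  have ti: "j \<in> tidx n \<Longrightarrow> j \<in> idx n m" for j using idx_split by blast
  have ci: "j \<in> cidx n m \<Longrightarrow> j \<in> idx n m" for j using idx_split by blast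
  show "conditionA n m E \<mu>"
    unfolding conditionA_def
  proof (intro conjI ballI)
    fix j k \<alpha> assume j: "j \<in> tidx n" and k: "k \<in> tidx n" and a: "\<alpha> \<in> cidx n m"
    have "LL n (Fc E) \<mu> k j \<alpha> = 0" using B ti[OF j] ti[OF k] a by blast
    then show "(\<Sum>i\<in>tidx n. \<mu> i j * Fc E \<alpha> k i - \<mu> i k * Fc E \<alpha> j i) = 0"
      using j k unfolding LL_def by (simp add: mult.commute)
  next
    fix j \<alpha> \<beta> assume j: "j \<in> tidx n" and a: "\<alpha> \<in> cidx n m" and b: "\<beta> \<in> cidx n m"
    have "LL n (Fc E) \<mu> j \<alpha> \<beta> = 0" using B ti[OF j] ci[OF a] b by blast
    then show "(\<Sum>i\<in>tidx n. \<mu> i \<alpha> * Fc E \<beta> j i) = 0"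
      using j tc_disj[OF a] unfolding LL_def by (simp add: mult.commute)
  qed
qed

lemma LL_sums:
  assumes "\<And>j. j \<in> tidx n \<Longrightarrow> (\<lambda>r. f r j q) sums P j q"
    and "\<And>j. j \<in> tidx n \<Longrightarrow> (\<lambda>r. f r j q') sums P j q'"
  shows "(\<lambda>r. LL n K (f r) q q' \<alpha>) sums LL n K P q q' \<alpha>"
  unfolding LL_def
  by (intro sums_sum sums_diff sums_mult assms)

lemma LL_scale: "LL n K (\<lambda>j q. c * P j q) q q' \<alpha> = c * LL n K P q q' \<alpha>"
  unfolding LL_def by (simp add: sum_distrib_left algebra_simps)

lemma LL_cong:
  assumes "\<And>j. j \<in> tidx n \<Longrightarrow> P j q = Q j q" "\<And>j. j \<in> tidx n \<Longrightarrow> P j q' = Q j q'"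
  shows "LL n K P q q' \<alpha> = LL n K Q q q' \<alpha>"
  unfolding LL_def using assms by (intro sum.cong refl) auto

lemma gen_iff:
  "generates_abelian_deformation n m E \<mu> \<longleftrightarrow>
    (\<forall>q\<in>idx n m. \<forall>q'\<in>idx n m. \<forall>\<alpha>\<in>cidx n m. LL n E \<mu> q q' \<alpha> = 0 \<and> LL n (Fc E) \<mu> q q' \<alpha> = 0)"
  (is "?G \<longleftrightarrow> ?R")
proof
  assume ?G
  then obtain \<phi> e where ph1: "\<forall>p\<in>idx n m. \<forall>q\<in>idx n m. \<phi> 1 p q = \<mu> p q" and e: "e > 0"
    and H: "\<And>t. \<bar>t\<bar> < e \<Longrightarrow>
           (\<forall>p\<in>idx n m. \<forall>q\<in>idx n m. summable (\<lambda>r. of_real t ^ Suc r * \<phi> (Suc r) p q)) \<and>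
           (\<forall>q\<in>idx n m. \<forall>q'\<in>idx n m.
              brk n m E (defo_vec n m \<phi> t q) (defo_vec n m \<phi> t q') = gzero)"
    unfolding generates_abelian_deformation_def by blast
  have main: "LL n K \<mu> q q' \<alpha> = 0"
    if K: "K = E \<or> K = Fc E" and q: "q \<in> idx n m" and q': "q' \<in> idx n m" and a: "\<alpha> \<in> cidx n m" for K q q' \<alpha>
  proof -
    have "LL n K (\<phi> (Suc 0)) q q' \<alpha> = 0"
    proof (rule powser_first_zero[OF e, where c = "\<lambda>r. LL n K (\<phi> (Suc r)) q q' \<alpha>"])
      fix t :: real assume t: "\<bar>t\<bar> < e"
      have bz: "brk n m E (defo_vec n m \<phi> t q) (defo_vec n m \<phi> t q') = gzero"
        using H[OF t] q q' by blast
      have "LL n E (Phi \<phi> t) q q' \<alpha> = 0 \<and> LL n (Fc E) (Phi \<phi> t) q q' \<alpha> = 0"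
      proof -
        from bz[unfolded brk_defo[OF q q'] gzero_def]
        have "(\<lambda>\<alpha>. if \<alpha> \<in> cidx n m then LL n E (Phi \<phi> t) q q' \<alpha> else 0) = (\<lambda>_. 0)"
          and "(\<lambda>\<alpha>. if \<alpha> \<in> cidx n m then LL n (Fc E) (Phi \<phi> t) q q' \<alpha> else 0) = (\<lambda>_. 0)"
          by simp_all
        from fun_cong[OF this(1), of \<alpha>] fun_cong[OF this(2), of \<alpha>] a show ?thesis by simp
      qed
      hence "LL n K (Phi \<phi> t) q q' \<alpha> = 0" using K by blast
      moreover have "(\<lambda>r. LL n K (\<lambda>j q. of_real t ^ Suc r * \<phi> (Suc r) j q) q q' \<alpha>) sums LL n K (Phi \<phi> t) q q' \<alpha>"
      proof (rule LL_sums)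
        fix j assume j: "j \<in> tidx n"
        then have jj: "j \<in> idx n m" using idx_split by blast
        show "(\<lambda>r. of_real t ^ Suc r * \<phi> (Suc r) j q) sums Phi \<phi> t j q"
          using H[OF t] jj q unfolding Phi_def by (auto intro: summable_sums)
        show "(\<lambda>r. of_real t ^ Suc r * \<phi> (Suc r) j q') sums Phi \<phi> t j q'"
          using H[OF t] jj q' unfolding Phi_def by (auto intro: summable_sums)
      qed
      ultimately show "(\<lambda>r. complex_of_real t ^ Suc r * LL n K (\<phi> (Suc r)) q q' \<alpha>) sums 0"
        by (simp add: LL_scale)
    qed
    moreover have "LL n K (\<phi> (Suc 0)) q q' \<alpha> = LL n K \<mu> q q' \<alpha>"
      using ph1 q q' idx_split by (intro LL_cong) auto
    ultimately show ?thesis by simp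
  qed
  show ?R using main by blast
next
  assume R: ?R
  define \<phi> where "\<phi> = (\<lambda>r::nat. if r = 1 then \<mu> else (\<lambda>_ _. 0))"
  have Ph: "Phi \<phi> t = (\<lambda>p q. of_real t * \<mu> p q)" for t
  proof (intro ext)
    fix p q
    have "(\<lambda>r. complex_of_real t ^ Suc r * \<phi> (Suc r) p q) = (\<lambda>r. if r = 0 then of_real t * \<mu> p q else 0)"
      by (auto simp: \<phi>_def)
    moreover have "(\<lambda>r::nat. if r = 0 then of_real t * \<mu> p q else 0) sums (of_real t * \<mu> p q)"
      using sums_single[of 0 "\<lambda>_. of_real t * \<mu> p q"] by simp
    ultimately show "Phi \<phi> t p q = of_real t * \<mu> p q"
      unfolding Phi_def by (simp add: sums_iff)
  qed
  show ?G
    unfolding generates_abelian_deformation_def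
  proof (intro exI conjI allI impI)
    show "\<forall>p\<in>idx n m. \<forall>q\<in>idx n m. \<phi> 1 p q = \<mu> p q" by (simp add: \<phi>_def)
    show "(1::real) > 0" by simp
    fix t :: real assume "\<bar>t\<bar> < 1"
    show "\<forall>p\<in>idx n m. \<forall>q\<in>idx n m. summable (\<lambda>r. complex_of_real t ^ Suc r * \<phi> (Suc r) p q)"
    proof (intro ballI)
      fix p q
      have "(\<lambda>r. complex_of_real t ^ Suc r * \<phi> (Suc r) p q) = (\<lambda>r. if r = 0 then of_real t * \<mu> p q else 0)"
        by (auto simp: \<phi>_def)
      then show "summable (\<lambda>r. complex_of_real t ^ Suc r * \<phi> (Suc r) p q)"
        using sums_single[of 0 "\<lambda>_. of_real t * \<mu> p q"] by (simp add: sums_iff)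
    qed
    show "\<forall>q\<in>idx n m. \<forall>q'\<in>idx n m. brk n m E (defo_vec n m \<phi> t q) (defo_vec n m \<phi> t q') = gzero"
    proof (intro ballI)
      fix q q' assume q: "q \<in> idx n m" and q': "q' \<in> idx n m"
      show "brk n m E (defo_vec n m \<phi> t q) (defo_vec n m \<phi> t q') = gzero"
        unfolding brk_defo[OF q q'] Ph LL_scale gzero_def
        using R q q' by (auto simp: fun_eq_iff)
    qed
  qed
qed


theorem theorem5p3:
  fixes n m :: nat
    and E :: "nat \<Rightarrow> nat \<Rightarrow> nat \<Rightarrow> complex"
    and \<mu> :: "nat \<Rightarrow> nat \<Rightarrow> complex"
  assumes "two_step_abelian_nilmanifold n m E"
  shows "generates_abelian_deformation n m E \<mu> \<longleftrightarrow>
           dbar_closed n m E \<mu> \<and> conditionA n m E \<mu>"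
  unfolding gen_iff dbar_closed_iff condA_iff by blast

end
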